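(* Let $n\geq 2$ and let $X$ be a finite subset of $\mathbb{R}^n$. Then there exists a polynomial map $F:\mathbb{R}^n\rightarrow\mathbb{R}^n$ such that $F(X)\subseteq \mathbb{R}\times\{0\}^{n-1}$ and $F$ has an inverse which is also a polynomial map $\mathbb{R}^n\rightarrow\mathbb{R}^n$. *)

theory Defs
  imports Main "HOL.Real"
begin

text \<open>Points of R^n are represented as functions nat => real vanishing at all indices >= n.\<close>

definition Rn :: "nat \<Rightarrow> (nat \<Rightarrow> real) set" where
  "Rn n = {x. \<forall>i\<ge>n. x i = 0}"

inductive_set poly_fun :: "nat \<Rightarrow> ((nat \<Rightarrow> real) \<Rightarrow> real) set" for n :: nat where
  const: "(\<lambda>x. c) \<in> poly_fun n"
| var: "i < n \<Longrightarrow> (\<lambda>x. x i) \<in> poly_fun n"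
| add: "p \<in> poly_fun n \<Longrightarrow> q \<in> poly_fun n \<Longrightarrow> (\<lambda>x. p x + q x) \<in> poly_fun n"
| mult: "p \<in> poly_fun n \<Longrightarrow> q \<in> poly_fun n \<Longrightarrow> (\<lambda>x. p x * q x) \<in> poly_fun n"

definition poly_map :: "nat \<Rightarrow> ((nat \<Rightarrow> real) \<Rightarrow> (nat \<Rightarrow> real)) \<Rightarrow> bool" where
  "poly_map n F \<longleftrightarrow> (\<forall>i<n. (\<lambda>x. F x i) \<in> poly_fun n) \<and> (\<forall>x. \<forall>i\<ge>n. F x i = 0)"

end

theory Submission
  imports Defs "HOL-Computational_Algebra.Polynomial"
begin

lemma pf_subst:
  assumes "P \<in> poly_fun n" "\<forall>i<n. (\<lambda>x. F x i) \<in> poly_fun n"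
  shows "(\<lambda>x. P (F x)) \<in> poly_fun n"
  using assms by (induction rule: poly_fun.induct) (auto intro: poly_fun.intros)

lemma pf_diff:
  assumes "p \<in> poly_fun n" "q \<in> poly_fun n"
  shows "(\<lambda>x. p x - q x) \<in> poly_fun n"
proof -
  have "(\<lambda>x. p x + (\<lambda>x. (-1::real)) x * q x) \<in> poly_fun n"
    using assms by (intro poly_fun.intros) auto
  thus ?thesis by simp
qed

lemma pf_sum:
  assumes "finite I" "\<forall>i\<in>I. f i \<in> poly_fun n"
  shows "(\<lambda>x. \<Sum>i\<in>I. f i x) \<in> poly_fun n"
  using assms
proof (induction I rule: finite_induct)
  case empty
  then show ?case by (simp add: poly_fun.const)
next
  case (insert a A)
  then show ?case using poly_fun.add[of "f a" n "\<lambda>x. \<Sum>i\<in>A. f i x"] by simp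
qed

lemma pf_prod:
  assumes "finite I" "\<forall>i\<in>I. f i \<in> poly_fun n"
  shows "(\<lambda>x. \<Prod>i\<in>I. f i x) \<in> poly_fun n"
  using assms
proof (induction I rule: finite_induct)
  case empty
  then show ?case by (simp add: poly_fun.const)
next
  case (insert a A)
  then show ?case using poly_fun.mult[of "f a" n "\<lambda>x. \<Prod>i\<in>A. f i x"] by simp
qed

lemma poly_map_comp:
  assumes "poly_map n F" "poly_map n G"
  shows "poly_map n (G \<circ> F)"
  unfolding poly_map_def
proof (intro conjI allI impI)
  fix i assume i: "i < n"
  have "(\<lambda>x. G x i) \<in> poly_fun n" using assms i unfolding poly_map_def by blast
  from pf_subst[OF this, of F] show "(\<lambda>x. (G \<circ> F) x i) \<in> poly_fun n"
    using assms(1) unfolding poly_map_def by (simp add: o_def)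
next
  fix x i assume "n \<le> i"
  thus "(G \<circ> F) x i = 0" using assms(2) unfolding poly_map_def by simp
qed

lemma interp:
  assumes "0 < n" "finite A"
  shows "\<exists>g. (\<lambda>x. g (x 0)) \<in> poly_fun n \<and> (\<forall>a\<in>A. g a = f a)"
  using assms(2)
proof (induction A rule: finite_induct)
  case empty
  show ?case by (rule exI[of _ "\<lambda>z. 0"]) (simp add: poly_fun.const)
next
  case (insert b A)
  then obtain g where g: "(\<lambda>x. g (x 0)) \<in> poly_fun n" "\<forall>a\<in>A. g a = f a" by blast
  define h where "h z = (\<Prod>a\<in>A. (z - a))" for z :: real
  have hb: "h b \<noteq> 0" using insert(1,2) by (auto simp: h_def)
  have hA: "\<forall>a\<in>A. h a = 0" using insert(1) by (auto simp: h_def)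
  have hp: "(\<lambda>x. h (x 0)) \<in> poly_fun n"
    unfolding h_def
    by (rule pf_prod[OF insert(1)]) (intro ballI pf_diff poly_fun.var poly_fun.const assms(1))
  define c where "c = (f b - g b) / h b"
  have "(\<lambda>x. g (x 0) + (\<lambda>x. c) x * h (x 0)) \<in> poly_fun n"
    by (intro poly_fun.intros g hp)
  moreover have "\<forall>a\<in>insert b A. g a + c * h a = f a"
    using g(2) hA hb by (auto simp: c_def)
  ultimately show ?case by (intro exI[of _ "\<lambda>z. g z + c * h z"]) simp
qed

theorem lemma2:
  fixes n :: nat and X :: "(nat \<Rightarrow> real) set"
  assumes "n \<ge> 2" and "finite X" and "X \<subseteq> Rn n"
  shows "\<exists>F G. poly_map n F \<and> poly_map n G
           \<and> (\<forall>x\<in>Rn n. G (F x) = x) \<and> (\<forall>y\<in>Rn n. F (G y) = y)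
           \<and> (\<forall>x\<in>X. \<forall>i. 1 \<le> i \<and> i < n \<longrightarrow> F x i = 0)"
proof -
  have n0: "0 < n" using assms(1) by simp
  define L where "L t x = x 0 + (\<Sum>i\<in>{1..<n}. t^i * x i)" for t :: real and x :: "nat \<Rightarrow> real"
  define P where "P x y = (\<Sum>i<n. monom (x i - y i) i)" for x y :: "nat \<Rightarrow> real"
  define B where "B = (\<Union>xy\<in>{xy\<in>X\<times>X. fst xy \<noteq> snd xy}. {t. poly (P (fst xy) (snd xy)) t = 0})"
  have Pnz: "P x y \<noteq> 0" if xyX: "x \<in> X" "y \<in> X" "x \<noteq> y" for x y
  proof -
    obtain i where i: "x i \<noteq> y i"
      using xyX(3) by (auto simp: fun_eq_iff)
    have xy: "x \<in> Rn n" "y \<in> Rn n" using xyX(1,2) assms(3) by auto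
    have "i < n"
    proof (rule ccontr)
      assume "\<not> i < n"
      hence "x i = 0" "y i = 0" using xy unfolding Rn_def by auto
      thus False using i by simp
    qed
    hence "coeff (P x y) i = x i - y i"
      unfolding P_def by (simp add: coeff_sum coeff_monom)
    thus ?thesis using i by auto
  qed
  have "finite B"
    unfolding B_def
    by (rule finite_UN_I) (use assms(2) Pnz in \<open>auto intro!: poly_roots_finite\<close>)
  then obtain t where t: "t \<notin> B"
    using ex_new_if_finite[OF infinite_UNIV_char_0] by blast
  have polyP: "poly (P x y) t = L t x - L t y" for x y
  proof -
    have "poly (P x y) t = (\<Sum>i<n. (x i - y i) * t^i)"
      unfolding P_def by (simp add: poly_sum poly_monom)
    also have "\<dots> = (x 0 - y 0) + (\<Sum>i\<in>{1..<n}. (x i - y i) * t^i)"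
      using n0 by (simp add: lessThan_atLeast0 sum.atLeast_Suc_lessThan)
    also have "\<dots> = L t x - L t y"
    proof -
      have "(\<Sum>i\<in>{1..<n}. (x i - y i) * t^i) = (\<Sum>i\<in>{1..<n}. t^i * x i) - (\<Sum>i\<in>{1..<n}. t^i * y i)"
        unfolding sum_subtractf[symmetric] by (rule sum.cong) (simp_all add: algebra_simps)
      thus ?thesis unfolding L_def by linarith
    qed
    finally show ?thesis .
  qed
  have inj: "inj_on (L t) X"
  proof (rule inj_onI, rule ccontr)
    fix x y assume xy: "x \<in> X" "y \<in> X" "L t x = L t y" "x \<noteq> y"
    hence "poly (P x y) t = 0" using polyP[of x y] by simp
    moreover have "(x,y) \<in> {xy\<in>X\<times>X. fst xy \<noteq> snd xy}" using xy by simp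
    ultimately have "t \<in> B" unfolding B_def by (intro UN_I[of "(x,y)"]) auto
    thus False using t by simp
  qed
  have "\<forall>j. \<exists>g. (\<lambda>x. g (x 0)) \<in> poly_fun n \<and> (\<forall>a\<in>L t ` X. g a = (inv_into X (L t) a) j)"
    by (rule allI, rule interp[OF n0 finite_imageI[OF assms(2)]])
  then have "\<exists>p. \<forall>j. (\<lambda>x. p j (x 0)) \<in> poly_fun n \<and> (\<forall>a\<in>L t ` X. p j a = (inv_into X (L t) a) j)"
    by (rule choice)
  then obtain p where pp: "\<forall>j. (\<lambda>x. p j (x 0)) \<in> poly_fun n \<and> (\<forall>a\<in>L t ` X. p j a = (inv_into X (L t) a) j)"
    by blast
  have p: "\<And>j. (\<lambda>x. p j (x 0)) \<in> poly_fun n"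
    "\<And>j a. a \<in> L t ` X \<Longrightarrow> p j a = (inv_into X (L t) a) j"
    using pp by blast+
  define H where "H x = (\<lambda>i. if i = 0 then L t x else if i < n then x i else 0)" for x
  define Hi where "Hi x = (\<lambda>i. if i = 0 then x 0 - (\<Sum>i\<in>{1..<n}. t^i * x i) else if i < n then x i else 0)" for x
  define T where "T y = (\<lambda>i. if i = 0 then y 0 else if i < n then y i - p i (y 0) else 0)" for y
  define Ti where "Ti y = (\<lambda>i. if i = 0 then y 0 else if i < n then y i + p i (y 0) else 0)" for y
  have sump: "(\<lambda>x. \<Sum>i\<in>{1..<n}. t^i * x i) \<in> poly_fun n"
    by (rule pf_sum) (simp, intro ballI poly_fun.mult[OF poly_fun.const poly_fun.var], simp)
  have v0: "(\<lambda>x. x 0) \<in> poly_fun n" by (rule poly_fun.var[OF n0])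
  have pmH: "poly_map n H"
    unfolding poly_map_def
  proof (intro conjI allI impI)
    fix i assume i: "i < n"
    show "(\<lambda>x. H x i) \<in> poly_fun n"
    proof (cases "i = 0")
      case True
      then show ?thesis unfolding H_def L_def using poly_fun.add[OF v0 sump] by simp
    next
      case False
      then show ?thesis unfolding H_def using poly_fun.var[OF i] i by simp
    qed
  qed (use n0 in \<open>simp add: H_def\<close>)
  have pmHi: "poly_map n Hi"
    unfolding poly_map_def
  proof (intro conjI allI impI)
    fix i assume i: "i < n"
    show "(\<lambda>x. Hi x i) \<in> poly_fun n"
    proof (cases "i = 0")
      case True
      then show ?thesis unfolding Hi_def using pf_diff[OF v0 sump] by simp
    next
      case False
      then show ?thesis unfolding Hi_def using poly_fun.var[OF i] i by simp
    qed
  qed (use n0 in \<open>simp add: Hi_def\<close>)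
  have pmT: "poly_map n T"
    unfolding poly_map_def
  proof (intro conjI allI impI)
    fix i assume i: "i < n"
    show "(\<lambda>x. T x i) \<in> poly_fun n"
    proof (cases "i = 0")
      case True
      then show ?thesis unfolding T_def using v0 by simp
    next
      case False
      then show ?thesis unfolding T_def using pf_diff[OF poly_fun.var[OF i] p(1)] i by simp
    qed
  qed (use n0 in \<open>simp add: T_def\<close>)
  have pmTi: "poly_map n Ti"
    unfolding poly_map_def
  proof (intro conjI allI impI)
    fix i assume i: "i < n"
    show "(\<lambda>x. Ti x i) \<in> poly_fun n"
    proof (cases "i = 0")
      case True
      then show ?thesis unfolding Ti_def using v0 by simp
    next
      case False
      then show ?thesis unfolding Ti_def using poly_fun.add[OF poly_fun.var[OF i] p(1)] i by simp
    qed
  qed (use n0 in \<open>simp add: Ti_def\<close>)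
  have RH: "H x \<in> Rn n" "Hi x \<in> Rn n" "T x \<in> Rn n" "Ti x \<in> Rn n" for x
    using n0 by (auto simp: Rn_def H_def Hi_def T_def Ti_def)
  have HiH: "Hi (H x) = x" if "x \<in> Rn n" for x
    using that n0 by (auto simp: Rn_def H_def Hi_def L_def)
  have HHi: "H (Hi x) = x" if "x \<in> Rn n" for x
    using that n0 by (auto simp: Rn_def H_def Hi_def L_def)
  have TiT: "Ti (T x) = x" if "x \<in> Rn n" for x
    using that n0 by (auto simp: Rn_def T_def Ti_def)
  have TTi: "T (Ti x) = x" if "x \<in> Rn n" for x
    using that n0 by (auto simp: Rn_def T_def Ti_def)
  show ?thesis
  proof (intro exI conjI ballI allI impI)
    show "poly_map n (T \<circ> H)" by (rule poly_map_comp[OF pmH pmT])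
    show "poly_map n (Hi \<circ> Ti)" by (rule poly_map_comp[OF pmTi pmHi])
    show "(Hi \<circ> Ti) ((T \<circ> H) x) = x" if "x \<in> Rn n" for x
      using that by (simp add: TiT RH HiH)
    show "(T \<circ> H) ((Hi \<circ> Ti) y) = y" if "y \<in> Rn n" for y
      using that by (simp add: HHi RH TTi)
    fix x i assume x: "x \<in> X" and i: "1 \<le> i \<and> i < n"
    have "p i (L t x) = x i" using p(2)[of "L t x" i] inv_into_f_f[OF inj x] x by simp
    thus "(T \<circ> H) x i = 0" using i by (simp add: T_def H_def)
  qed
qed

end
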